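(* Let $f:\mathbb{R}^n\to\mathbb{R}$ be convex and continuously differentiable, let $w^*\in\Delta^n$ be a minimizer of $f$ over $\Delta^n$, and let $t\mapsto w^t$ be continuously differentiable in $t$ and satisfy the Cauchy-Simplex gradient flow $$\frac{dw^t}{dt} = -\beta\, w^t\odot\Big(\nabla f(w^t) - \big(w^t\cdot\nabla f(w^t)\big)\mathbb{1}\Big)$$ for a constant $\beta>0$. Then, as long as $w^t\in\operatorname{int}(\Delta^n)$, the relative entropy $$D(w^*\,|\,w^t)=\sum_{i:\,w^*_i\neq 0} w^*_i\log\!\left(\frac{w^*_i}{w^t_i}\right)$$ is a decreasing (non-increasing) function of time.
   Context: $\Delta^n=\{w\in\mathbb{R}^n : \sum_i w_i=1,\ w_i\ge 0\}$ is the probability simplex and $\operatorname{int}(\Delta^n)$ denotes the points of $\Delta^n$ with all coordinates strictly positive. $\odot$ denotes componentwise multiplication and $\mathbb{1}$ the all-ones vector. *)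

theory Defs
  imports "HOL-Analysis.Analysis"
begin

definition prob_simplex :: "(real ^ 'n) set" where
  "prob_simplex = {w. (\<Sum>i\<in>UNIV. w $ i) = 1 \<and> (\<forall>i. 0 \<le> w $ i)}"

definition prob_simplex_int :: "(real ^ 'n) set" where
  "prob_simplex_int = {w. (\<Sum>i\<in>UNIV. w $ i) = 1 \<and> (\<forall>i. 0 < w $ i)}"

definition rel_entropy :: "real ^ 'n \<Rightarrow> real ^ 'n \<Rightarrow> real" where
  "rel_entropy u w = (\<Sum>i\<in>{i. u $ i \<noteq> 0}. u $ i * ln (u $ i / w $ i))"

definition cs_field :: "real \<Rightarrow> (real ^ 'n \<Rightarrow> real ^ 'n) \<Rightarrow> real ^ 'n \<Rightarrow> real ^ 'n" where
  "cs_field \<beta> gf w = (\<chi> i. - \<beta> * (w $ i * (gf w $ i - (w \<bullet> gf w))))"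

end

theory Submission imports Defs begin

lemma tangent_ineq:
  fixes f :: "real ^ 'n \<Rightarrow> real"
  assumes conv: "convex_on UNIV f"
    and grad: "\<And>x. (f has_derivative (\<lambda>h. gf x \<bullet> h)) (at x)"
  shows "f y \<ge> f x + gf x \<bullet> (y - x)"
proof -
  define d where "d = y - x"
  define h where "h = (\<lambda>s::real. f (x + s *\<^sub>R d))"
  have ch: "convex_on UNIV h"
    unfolding h_def
  proof (rule convex_onI)
    fix u a b :: real assume u: "0 < u" "u < 1"
    have "x + ((1 - u) * a + u * b) *\<^sub>R d = (1 - u) *\<^sub>R (x + a *\<^sub>R d) + u *\<^sub>R (x + b *\<^sub>R d)"
      by (simp add: algebra_simps)
    then show "f (x + ((1 - u) *\<^sub>R a + u *\<^sub>R b) *\<^sub>R d) \<le> (1 - u) * f (x + a *\<^sub>R d) + u * f (x + b *\<^sub>R d)"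
      using conv u by (simp add: convex_on_def)
  qed simp
  have dh: "(h has_field_derivative (gf x \<bullet> d)) (at 0 within UNIV)"
  proof -
    have "((\<lambda>s::real. x + s *\<^sub>R d) has_derivative (\<lambda>s. s *\<^sub>R d)) (at 0)"
      by (auto intro!: derivative_eq_intros)
    from has_derivative_compose[OF this grad[of "x + 0 *\<^sub>R d"]]
    have "(h has_derivative (\<lambda>s. gf x \<bullet> (s *\<^sub>R d))) (at 0)"
      by (simp add: h_def o_def)
    then show ?thesis unfolding has_field_derivative_def
      by (simp add: mult.commute[of _ "gf x \<bullet> d"])
  qed
  have "h 1 - h 0 \<ge> (gf x \<bullet> d) * (1 - 0)"
    by (rule convex_on_imp_above_tangent[OF ch]) (use dh in auto)
  then show ?thesis by (simp add: h_def d_def)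
qed

theorem theorem4p2:
  fixes f :: "real ^ 'n \<Rightarrow> real"
    and gf :: "real ^ 'n \<Rightarrow> real ^ 'n"
    and wstar :: "real ^ 'n"
    and w :: "real \<Rightarrow> real ^ 'n"
    and T :: "real set"
    and \<beta> :: real
  assumes conv: "convex_on UNIV f"
    and grad: "\<And>x. (f has_derivative (\<lambda>h. gf x \<bullet> h)) (at x)"
    and grad_cont: "continuous_on UNIV gf"
    and wstar_in: "wstar \<in> prob_simplex"
    and wstar_min: "\<And>v. v \<in> prob_simplex \<Longrightarrow> f wstar \<le> f v"
    and beta_pos: "\<beta> > 0"
    and T_int: "is_interval T"
    and flow: "\<And>t. t \<in> T \<Longrightarrow> (w has_vector_derivative cs_field \<beta> gf (w t)) (at t within T)"
    and w_C1: "continuous_on T (\<lambda>t. cs_field \<beta> gf (w t))"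
    and interior: "\<And>t. t \<in> T \<Longrightarrow> w t \<in> prob_simplex_int"
  shows "\<forall>s\<in>T. \<forall>t\<in>T. s \<le> t \<longrightarrow> rel_entropy wstar (w t) \<le> rel_entropy wstar (w s)"
proof -
  define S where "S = {i. wstar $ i \<noteq> 0}"
  have ws0: "\<And>i. 0 \<le> wstar $ i" using wstar_in by (simp add: prob_simplex_def)
  have wsS: "\<And>i. i \<in> S \<Longrightarrow> 0 < wstar $ i" using ws0 unfolding S_def
    by (metis less_eq_real_def mem_Collect_eq)
  have wpos: "\<And>t i. t \<in> T \<Longrightarrow> 0 < w t $ i" using interior by (simp add: prob_simplex_int_def)
  define F where "F = (\<lambda>t. \<Sum>i\<in>S. wstar $ i * (ln (wstar $ i) - ln (w t $ i)))"
  define Dd where "Dd = (\<lambda>t. - (\<Sum>i\<in>S. wstar $ i * (cs_field \<beta> gf (w t) $ i / w t $ i)))"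
  have FE: "rel_entropy wstar (w t) = F t" if "t \<in> T" for t
    unfolding rel_entropy_def F_def S_def[symmetric]
    by (rule sum.cong[OF refl]) (simp add: ln_div wsS wpos[OF that] less_imp_neq[OF wpos[OF that], symmetric])
  have comp: "((\<lambda>t. w t $ i) has_real_derivative cs_field \<beta> gf (w t) $ i) (at t within T)"
    if "t \<in> T" for t i
    using bounded_linear.has_vector_derivative[OF bounded_linear_vec_nth flow[OF that], of i]
    by (simp add: has_real_derivative_iff_has_vector_derivative)
  have dF: "(F has_real_derivative Dd t) (at t within T)" if t: "t \<in> T" for t
  proof -
    have "(F has_real_derivative (\<Sum>i\<in>S. wstar $ i * (0 - cs_field \<beta> gf (w t) $ i / w t $ i))) (at t within T)"
      unfolding F_def
      apply (intro DERIV_sum DERIV_cmult DERIV_diff DERIV_const)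
      subgoal for i
        using DERIV_chain2[OF DERIV_ln[OF wpos[OF t, of i]] comp[OF t, of i]]
        by (simp add: divide_simps)
      done
    then show ?thesis unfolding Dd_def by (simp add: sum_negf)
  qed
  have Dneg: "Dd t \<le> 0" if t: "t \<in> T" for t
  proof -
    define g where "g = gf (w t)"
    have nz: "\<And>i. w t $ i \<noteq> 0" using wpos[OF t] by (metis less_irrefl)
    have pt: "wstar $ i * (cs_field \<beta> gf (w t) $ i / w t $ i) = - \<beta> * (wstar $ i * (g $ i - (w t \<bullet> g)))" for i
    proof -
      have e: "cs_field \<beta> gf (w t) $ i = w t $ i * (- \<beta> * (g $ i - (w t \<bullet> g)))"
        unfolding cs_field_def vec_lambda_beta g_def by (rule mult.left_commute)
      show ?thesis unfolding e nonzero_mult_div_cancel_left[OF nz[of i]] by (rule mult.left_commute)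
    qed
    have "Dd t = \<beta> * (\<Sum>i\<in>S. wstar $ i * (g $ i - (w t \<bullet> g)))"
      unfolding Dd_def pt by (simp add: sum_distrib_left sum_negf)
    also have "(\<Sum>i\<in>S. wstar $ i * (g $ i - (w t \<bullet> g))) = (\<Sum>i\<in>S. wstar $ i * g $ i) - (\<Sum>i\<in>S. wstar $ i) * (w t \<bullet> g)"
      by (simp add: right_diff_distrib sum_subtractf sum_distrib_right mult.assoc)
    also have "(\<Sum>i\<in>S. wstar $ i * g $ i) = (\<Sum>i\<in>UNIV. wstar $ i * g $ i)"
      by (rule sum.mono_neutral_left) (auto simp: S_def)
    also have "\<dots> = wstar \<bullet> g" by (simp add: inner_vec_def)
    also have "(\<Sum>i\<in>S. wstar $ i) = (\<Sum>i\<in>UNIV. wstar $ i)"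
      by (rule sum.mono_neutral_left) (auto simp: S_def)
    also have "\<dots> = 1" using wstar_in by (simp add: prob_simplex_def)
    finally have D: "Dd t = \<beta> * (g \<bullet> (wstar - w t))" by (simp add: inner_diff_right inner_commute[of g])
    have "f wstar \<ge> f (w t) + g \<bullet> (wstar - w t)"
      unfolding g_def by (rule tangent_ineq[OF conv grad])
    moreover have "w t \<in> prob_simplex" using interior[OF t]
      by (auto simp: prob_simplex_def prob_simplex_int_def less_imp_le)
    ultimately have "g \<bullet> (wstar - w t) \<le> 0" using wstar_min by force
    then show ?thesis unfolding D using beta_pos by (simp add: mult_nonneg_nonpos)
  qed
  show ?thesis
  proof (intro ballI impI)
    fix s t assume s: "s \<in> T" and t: "t \<in> T" and st: "s \<le> t"
    have sub: "{s..t} \<subseteq> T"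
    proof
      fix x assume "x \<in> {s..t}"
      then have "s \<le> x" "x \<le> t" by auto
      then show "x \<in> T" using T_int s t unfolding is_interval_1 by blast
    qed
    have "\<exists>x\<in>{s..t}. F t - F s = (\<lambda>h. Dd x * h) (t - s)"
    proof (rule mvt_very_simple[OF st])
      fix x assume "s \<le> x" "x \<le> t"
      then have x: "x \<in> T" using sub by (meson atLeastAtMost_iff subsetD)
      show "(F has_derivative (\<lambda>h. Dd x * h)) (at x within {s..t})"
        using has_derivative_subset[OF dF[OF x, unfolded has_field_derivative_def] sub]
        .
    qed
    then obtain x where x: "x \<in> {s..t}" "F t - F s = Dd x * (t - s)" by auto
    have xT: "x \<in> T" using x(1) sub by blast
    have "Dd x * (t - s) \<le> 0" using Dneg[OF xT] st by (intro mult_nonpos_nonneg) auto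
    then show "rel_entropy wstar (w t) \<le> rel_entropy wstar (w s)"
      using x(2) FE[OF s] FE[OF t] by simp
  qed
qed

end
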